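(* Let $C\subset\mathbb{R}^d$ be a smooth centrally symmetric convex body. Then every sticky infinitesimally rigid $C$-packing is sticky rigid.
   Context: A centrally symmetric convex body $C$ (compact, convex, non-empty interior, $C=-C$) defines the norm $\|x\|_C=\inf\{\lambda>0:x\in\lambda C\}$; $C$ is smooth if each boundary point has a unique supporting hyperplane; $\varphi_C(x)$ denotes the derivative of $\tfrac12\|\cdot\|_C^2$ at $x\ne0$. A $C$-packing $P=(G,p,r)$ is a finite family $\{r_vC+p_v:v\in V\}$ ($r_v>0$) with pairwise disjoint interiors, with contact graph $G=(V,E)$ ($vw\in E$ iff the copies intersect). The rigidity matrix $R_C(G,p)$ is the $|E|\times d|V|$ matrix whose row $vw$ has $\varphi_C(p_v-p_w)$ in the $v$ columns, $\varphi_C(p_w-p_v)$ in the $w$ columns and zeros elsewhere. A flex is $u\in\ker R_C(G,p)$; it is trivial if there is an affine map $g$ in the tangent space at the identity of the isometry group of $(\mathbb{R}^d,\|\cdot\|_C)$ with $g(p_v)=u_v$ for all $v$. $P$ is sticky infinitesimally rigid if it is well-positioned ($p_v\neq p_w$ for $vw\in E$ and $\|\cdot\|_C$ differentiable at each $p_v-p_w$) and all flexes are trivial. $P$ is sticky rigid if every continuous path $\alpha:[0,\delta]\to\mathbb{R}^{d|V|}$ with $\alpha(0)=p$ and $\|\alpha_v(t)-\alpha_w(t)\|_C=\|p_v-p_w\|_C$ for all $vw\in E$, $t$, is such that each $\alpha(t)$ is the image of $p$ under an isometry of $(\mathbb{R}^d,\|\cdot\|_C)$. *)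

theory Defs
  imports "HOL-Analysis.Analysis"
begin

definition cs_convex_body :: "'a::euclidean_space set \<Rightarrow> bool" where
  "cs_convex_body C \<longleftrightarrow> compact C \<and> convex C \<and> interior C \<noteq> {} \<and> uminus ` C = C"

definition supporting_hyperplane :: "'a::euclidean_space set \<Rightarrow> 'a \<Rightarrow> 'a set \<Rightarrow> bool" where
  "supporting_hyperplane C x H \<longleftrightarrow>
     (\<exists>u. u \<noteq> 0 \<and> (\<forall>y\<in>C. u \<bullet> y \<le> u \<bullet> x) \<and> H = {y. u \<bullet> y = u \<bullet> x})"

definition smooth_body :: "'a::euclidean_space set \<Rightarrow> bool" where
  "smooth_body C \<longleftrightarrow> (\<forall>x\<in>frontier C. \<exists>!H. supporting_hyperplane C x H)"

definition normC :: "'a::euclidean_space set \<Rightarrow> 'a \<Rightarrow> real" where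
  "normC C x = Inf {s. s > 0 \<and> x \<in> (\<lambda>y. s *\<^sub>R y) ` C}"

definition phiC :: "'a::euclidean_space set \<Rightarrow> 'a \<Rightarrow> 'a" where
  "phiC C x = (SOME g. ((\<lambda>y. (normC C y)\<^sup>2 / 2) has_derivative (\<lambda>h. g \<bullet> h)) (at x))"

definition copyC :: "'a::euclidean_space set \<Rightarrow> ('v \<Rightarrow> 'a) \<Rightarrow> ('v \<Rightarrow> real) \<Rightarrow> 'v \<Rightarrow> 'a set" where
  "copyC C p r v = (\<lambda>x. r v *\<^sub>R x + p v) ` C"

definition C_packing :: "'a::euclidean_space set \<Rightarrow> 'v set \<Rightarrow> ('v \<Rightarrow> 'a) \<Rightarrow> ('v \<Rightarrow> real) \<Rightarrow> bool" where
  "C_packing C V p r \<longleftrightarrow> finite V \<and> (\<forall>v\<in>V. r v > 0) \<and>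
     (\<forall>v\<in>V. \<forall>w\<in>V. v \<noteq> w \<longrightarrow> interior (copyC C p r v) \<inter> interior (copyC C p r w) = {})"

definition contact_edge :: "'a::euclidean_space set \<Rightarrow> 'v set \<Rightarrow> ('v \<Rightarrow> 'a) \<Rightarrow> ('v \<Rightarrow> real) \<Rightarrow> 'v \<Rightarrow> 'v \<Rightarrow> bool" where
  "contact_edge C V p r v w \<longleftrightarrow> v \<in> V \<and> w \<in> V \<and> v \<noteq> w \<and> copyC C p r v \<inter> copyC C p r w \<noteq> {}"

definition isometryC :: "'a::euclidean_space set \<Rightarrow> ('a \<Rightarrow> 'a) \<Rightarrow> bool" where
  "isometryC C f \<longleftrightarrow> bij f \<and> (\<forall>x y. normC C (f x - f y) = normC C (x - y))"

definition infinitesimal_isometry :: "'a::euclidean_space set \<Rightarrow> ('a \<Rightarrow> 'a) \<Rightarrow> bool" where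
  "infinitesimal_isometry C g \<longleftrightarrow>
     (\<exists>\<gamma> :: real \<Rightarrow> 'a \<Rightarrow> 'a. (\<forall>t. isometryC C (\<gamma> t)) \<and> \<gamma> 0 = id \<and>
        (\<forall>x. ((\<lambda>t. \<gamma> t x) has_vector_derivative g x) (at 0)))"

text \<open>u is in the kernel of the rigidity matrix R_C(G,p).\<close>
definition is_flex :: "'a::euclidean_space set \<Rightarrow> 'v set \<Rightarrow> ('v \<Rightarrow> 'a) \<Rightarrow> ('v \<Rightarrow> real) \<Rightarrow> ('v \<Rightarrow> 'a) \<Rightarrow> bool" where
  "is_flex C V p r u \<longleftrightarrow>
     (\<forall>v w. contact_edge C V p r v w \<longrightarrow>
        phiC C (p v - p w) \<bullet> u v + phiC C (p w - p v) \<bullet> u w = 0)"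

definition trivial_flex :: "'a::euclidean_space set \<Rightarrow> 'v set \<Rightarrow> ('v \<Rightarrow> 'a) \<Rightarrow> ('v \<Rightarrow> 'a) \<Rightarrow> bool" where
  "trivial_flex C V p u \<longleftrightarrow>
     (\<exists>g. (\<exists>A b. linear A \<and> g = (\<lambda>x. A x + b)) \<and> infinitesimal_isometry C g \<and> (\<forall>v\<in>V. g (p v) = u v))"

definition well_positioned :: "'a::euclidean_space set \<Rightarrow> 'v set \<Rightarrow> ('v \<Rightarrow> 'a) \<Rightarrow> ('v \<Rightarrow> real) \<Rightarrow> bool" where
  "well_positioned C V p r \<longleftrightarrow>
     (\<forall>v w. contact_edge C V p r v w \<longrightarrow>
        p v \<noteq> p w \<and> normC C differentiable (at (p v - p w)))"

definition sticky_inf_rigid :: "'a::euclidean_space set \<Rightarrow> 'v set \<Rightarrow> ('v \<Rightarrow> 'a) \<Rightarrow> ('v \<Rightarrow> real) \<Rightarrow> bool" where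
  "sticky_inf_rigid C V p r \<longleftrightarrow> well_positioned C V p r \<and>
     (\<forall>u. is_flex C V p r u \<longrightarrow> trivial_flex C V p u)"

definition sticky_rigid :: "'a::euclidean_space set \<Rightarrow> 'v set \<Rightarrow> ('v \<Rightarrow> 'a) \<Rightarrow> ('v \<Rightarrow> real) \<Rightarrow> bool" where
  "sticky_rigid C V p r \<longleftrightarrow>
     (\<forall>\<delta>>0. \<forall>\<alpha> :: real \<Rightarrow> 'v \<Rightarrow> 'a.
        (\<forall>v\<in>V. continuous_on {0..\<delta>} (\<lambda>t. \<alpha> t v)) \<and> (\<forall>v\<in>V. \<alpha> 0 v = p v) \<and>
        (\<forall>v w t. contact_edge C V p r v w \<and> t \<in> {0..\<delta>} \<longrightarrow>
            normC C (\<alpha> t v - \<alpha> t w) = normC C (p v - p w))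
        \<longrightarrow> (\<forall>t\<in>{0..\<delta>}. \<exists>f. isometryC C f \<and> (\<forall>v\<in>V. \<alpha> t v = f (p v))))"

end

theory Submission
  imports Defs
begin

context
  fixes C :: "'a::euclidean_space set"
  assumes cs: "cs_convex_body C"
begin

lemma cs_compact: "compact C" and cs_convex: "convex C" and cs_int: "interior C \<noteq> {}"
  and cs_sym: "uminus ` C = C"
  using cs by (auto simp: cs_convex_body_def)

lemma cs_neg: "x \<in> C \<Longrightarrow> - x \<in> C"
  using cs_sym by (metis image_eqI)

lemma zero_interior: "0 \<in> interior C"
proof -
  obtain x where x: "x \<in> interior C" using cs_int by auto
  then obtain e where e: "e > 0" "ball x e \<subseteq> C" using mem_interior by blast
  have "ball (-x) e \<subseteq> C"
  proof
    fix y assume "y \<in> ball (-x) e"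
    then have "-y \<in> ball x e" by (auto simp: dist_norm norm_minus_commute add.commute)
    then have "-y \<in> C" using e by auto
    then show "y \<in> C" using cs_neg by fastforce
  qed
  then have "-x \<in> interior C" using e mem_interior by blast
  have "(1/2) *\<^sub>R x + (1/2) *\<^sub>R (-x) \<in> interior C"
    by (rule convexD[OF convex_interior[OF cs_convex] x \<open>-x \<in> interior C\<close>]) auto
  then show ?thesis by (simp add: scaleR_right_diff_distrib[symmetric])
qed

definition "rC = (SOME r. r > 0 \<and> cball 0 r \<subseteq> C)"
definition "RC = (SOME R. R > 0 \<and> C \<subseteq> cball 0 R)"

lemma rC: "rC > 0" "cball 0 rC \<subseteq> C"
proof -
  have "\<exists>r. r > 0 \<and> cball 0 r \<subseteq> C" using zero_interior mem_interior_cball by blast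
  then show "rC > 0" "cball 0 rC \<subseteq> C" unfolding rC_def by (metis (mono_tags, lifting) someI_ex)+
qed

lemma RC: "RC > 0" "C \<subseteq> cball 0 RC"
proof -
  have "bounded C" using cs_compact compact_imp_bounded by blast
  then have "\<exists>R. R > 0 \<and> C \<subseteq> cball 0 R" unfolding bounded_pos by (auto simp: subset_iff)
  then show "RC > 0" "C \<subseteq> cball 0 RC" unfolding RC_def by (metis (mono_tags, lifting) someI_ex)+
qed

lemma zero_in: "0 \<in> C" using rC by auto

abbreviation "SC x \<equiv> {s. s > 0 \<and> x \<in> (\<lambda>y. s *\<^sub>R y) ` C}"

lemma SC_upclosed: assumes "s \<in> SC x" "s \<le> t" shows "t \<in> SC x"
proof -
  from assms obtain y where y: "y \<in> C" "x = s *\<^sub>R y" "s > 0" by auto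
  have t: "t > 0" using assms y by auto
  have "(s/t) *\<^sub>R y + (1 - s/t) *\<^sub>R 0 \<in> C"
    by (rule convexD[OF cs_convex y(1) zero_in]) (use y t assms in auto)
  moreover have "x = t *\<^sub>R ((s/t) *\<^sub>R y + (1 - s/t) *\<^sub>R 0)" using y t by simp
  ultimately show ?thesis using t by (auto intro!: image_eqI)
qed

lemma SC_big: assumes "t > norm x / rC" shows "t \<in> SC x"
proof -
  have t: "t > 0" using assms rC(1) by (smt (verit) divide_nonneg_pos norm_ge_zero)
  have "norm ((1/t) *\<^sub>R x) \<le> rC" using assms t rC(1) by (simp add: field_simps)
  then have "(1/t) *\<^sub>R x \<in> C" using rC(2) by auto
  moreover have "x = t *\<^sub>R ((1/t) *\<^sub>R x)" using t by simp
  ultimately show ?thesis using t by blast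
qed

lemma SC_lower: assumes "s \<in> SC x" shows "norm x \<le> s * RC"
proof -
  from assms obtain y where y: "y \<in> C" "x = s *\<^sub>R y" "s > 0" by auto
  have "norm y \<le> RC" using RC(2) y by auto
  then show ?thesis using y by (simp add: mult_left_mono mult.commute)
qed

lemma SC_bdd: "bdd_below (SC x)" by (rule bdd_belowI[of _ 0]) auto

lemma SC_ne: "SC x \<noteq> {}" using SC_big[where t="norm x / rC + 1" and x=x] by auto

lemma normC_le_SC: "s \<in> SC x \<Longrightarrow> normC C x \<le> s"
  unfolding normC_def by (rule cInf_lower[OF _ SC_bdd])

lemma normC_nonneg: "normC C x \<ge> 0"
  unfolding normC_def using SC_ne by (rule cInf_greatest) auto

lemma gt_normC_SC: assumes "t > normC C x" shows "t \<in> SC x"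
proof -
  obtain s where "s \<in> SC x" "s < t" using cInf_lessD[OF SC_ne] assms unfolding normC_def by blast
  then show ?thesis using SC_upclosed by auto
qed

lemma normC_upper: "normC C x \<le> norm x / rC"
proof (rule field_le_epsilon)
  fix e :: real assume "e > 0"
  then show "normC C x \<le> norm x / rC + e" by (intro normC_le_SC SC_big) simp
qed

lemma normC_lower: "norm x \<le> RC * normC C x"
proof (rule field_le_epsilon)
  fix e :: real assume e: "e > 0"
  have "normC C x + e/RC \<in> SC x" by (rule gt_normC_SC) (use e RC(1) in simp)
  then have "norm x \<le> (normC C x + e/RC) * RC" by (rule SC_lower)
  also have "\<dots> = RC * normC C x + e" using RC(1) by (simp add: field_simps)
  finally show "norm x \<le> RC * normC C x + e" .
qed

lemma normC_eq0: "normC C x = 0 \<longleftrightarrow> x = 0"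
  using normC_lower[of x] normC_upper[of x] normC_nonneg[of x] rC(1)
  by (metis div_0 mult_zero_right norm_le_zero_iff order_antisym_conv norm_zero)

lemma normC_scale_le: assumes c: "c > 0" shows "normC C (c *\<^sub>R x) \<le> c * normC C x"
proof (rule field_le_epsilon)
  fix e :: real assume e: "e > 0"
  define s0 where "s0 = normC C x + e/c"
  have "s0 \<in> SC x" unfolding s0_def by (rule gt_normC_SC) (use e c in simp)
  then obtain y where y: "y \<in> C" "x = s0 *\<^sub>R y" and pos: "s0 > 0" by auto
  have "c *\<^sub>R x = (c * s0) *\<^sub>R y" using y(2) by simp
  then have "c * s0 \<in> SC (c *\<^sub>R x)" using y(1) pos c by auto
  then have "normC C (c *\<^sub>R x) \<le> c * s0" by (rule normC_le_SC)
  also have "\<dots> = c * normC C x + e" using c by (simp add: field_simps s0_def)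
  finally show "normC C (c *\<^sub>R x) \<le> c * normC C x + e" .
qed

lemma normC_scale_pos: assumes c: "c > 0" shows "normC C (c *\<^sub>R x) = c * normC C x"
proof -
  have "normC C x = normC C ((1/c) *\<^sub>R (c *\<^sub>R x))" using c by simp
  also have "\<dots> \<le> (1/c) * normC C (c *\<^sub>R x)" using c by (intro normC_scale_le) auto
  finally have "c * normC C x \<le> normC C (c *\<^sub>R x)" using c by (simp add: field_simps)
  then show ?thesis using normC_scale_le[OF c, of x] by linarith
qed

lemma SC_neg: "SC (-x) = SC x"
proof -
  have "s \<in> SC (-x)" if "s \<in> SC x" for s x
  proof -
    from that obtain y where "y \<in> C" "x = s *\<^sub>R y" "s > 0" by auto
    then have "-y \<in> C" "-x = s *\<^sub>R (-y)" using cs_neg by auto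
    then show ?thesis using \<open>s > 0\<close> by blast
  qed
  from this[of _ x] this[of _ "-x"] show ?thesis by auto
qed

lemma normC_neg: "normC C (-x) = normC C x"
  unfolding normC_def using SC_neg by simp

lemma normC_commute: "normC C (x - y) = normC C (y - x)"
  using normC_neg[of "x - y"] by simp

lemma normC_zero[simp]: "normC C 0 = 0" using normC_eq0 by simp

lemma normC_scale: "normC C (c *\<^sub>R x) = \<bar>c\<bar> * normC C x"
proof (cases "c > 0")
  case True then show ?thesis by (simp add: normC_scale_pos)
next
  case False
  show ?thesis
  proof (cases "c = 0")
    case True then show ?thesis by simp
  next
    case False
    then have "-c > 0" using \<open>\<not> c > 0\<close> by simp
    have "normC C (c *\<^sub>R x) = normC C ((-c) *\<^sub>R (-x))" by simp
    also have "\<dots> = (-c) * normC C x" using normC_scale_pos[OF \<open>-c > 0\<close>] normC_neg by simp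
    finally show ?thesis using \<open>-c > 0\<close> by simp
  qed
qed

lemma normC_triangle: "normC C (x + y) \<le> normC C x + normC C y"
proof (rule field_le_epsilon)
  fix e :: real assume e: "e > 0"
  define s where "s = normC C x + e/2"
  define t where "t = normC C y + e/2"
  have sp: "s > 0" "t > 0" using normC_nonneg[of x] normC_nonneg[of y] e by (auto simp: s_def t_def)
  have "s \<in> SC x" "t \<in> SC y" by (rule gt_normC_SC, use e in \<open>simp add: s_def t_def\<close>)+
  then obtain a b where ab: "a \<in> C" "x = s *\<^sub>R a" "b \<in> C" "y = t *\<^sub>R b" by auto
  have "(s/(s+t)) *\<^sub>R a + (t/(s+t)) *\<^sub>R b \<in> C"
    by (rule convexD[OF cs_convex ab(1) ab(3)]) (use sp in \<open>auto simp: add_divide_distrib[symmetric]\<close>)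
  moreover have "x + y = (s+t) *\<^sub>R ((s/(s+t)) *\<^sub>R a + (t/(s+t)) *\<^sub>R b)"
    using ab sp by (simp add: scaleR_add_right)
  ultimately have "s + t \<in> SC (x+y)" using sp by (metis (mono_tags, lifting) add_pos_pos image_eqI mem_Collect_eq)
  then have "normC C (x+y) \<le> s + t" by (rule normC_le_SC)
  then show "normC C (x + y) \<le> normC C x + normC C y + e" by (simp add: s_def t_def)
qed

lemma normC_diff_triangle: "normC C (x - z) \<le> normC C (x - y) + normC C (y - z)"
  using normC_triangle[of "x - y" "y - z"] by simp

lemma normC_lip: "\<bar>normC C x - normC C y\<bar> \<le> norm (x - y) / rC"
proof -
  have "normC C x \<le> normC C y + normC C (x - y)" using normC_triangle[of y "x - y"] by simp
  moreover have "normC C y \<le> normC C x + normC C (y - x)" using normC_triangle[of x "y - x"] by simp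
  moreover have "normC C (x - y) \<le> norm (x - y) / rC" "normC C (y - x) \<le> norm (x - y) / rC"
    using normC_upper[of "x-y"] normC_upper[of "y - x"] by (auto simp: norm_minus_commute)
  ultimately show ?thesis by linarith
qed

lemma normC_continuous: "continuous_on UNIV (normC C)"
proof (rule continuous_onI)
  fix x :: 'a and e :: real assume e: "e > 0"
  show "\<exists>d>0. \<forall>x'\<in>UNIV. dist x' x < d \<longrightarrow> dist (normC C x') (normC C x) \<le> e"
  proof (intro exI[of _ "e * rC"] conjI ballI impI)
    show "e * rC > 0" using e rC(1) by simp
    fix y assume "dist y x < e * rC"
    then have "norm (y - x) / rC \<le> e" using rC(1) by (simp add: dist_norm field_simps)
    then show "dist (normC C y) (normC C x) \<le> e" using normC_lip[of y x] by (simp add: dist_real_def)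
  qed
qed

lemma isCont_normC: "isCont (normC C) x"
  using normC_continuous by (simp add: continuous_on_eq_continuous_at)

lemma tendsto_normC[tendsto_intros]: "(f \<longlongrightarrow> l) F \<Longrightarrow> ((\<lambda>x. normC C (f x)) \<longlongrightarrow> normC C l) F"
  using isCont_normC isCont_tendsto_compose by blast

end


context
  fixes C :: "'a::euclidean_space set"
  assumes cs: "cs_convex_body C"
begin

lemma half_diff: "(a::'a) - (1/2) *\<^sub>R a = (1/2) *\<^sub>R a"
proof -
  have "a = (1/2) *\<^sub>R a + (1/2) *\<^sub>R a" by (simp add: scaleR_add_left[symmetric])
  then show ?thesis by (metis add_diff_cancel)
qed

lemma iso_id: "isometryC C id" by (simp add: isometryC_def)

lemma iso_comp: "isometryC C f \<Longrightarrow> isometryC C g \<Longrightarrow> isometryC C (f \<circ> g)"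
  by (auto simp: isometryC_def bij_comp)

lemma iso_inv: assumes "isometryC C f" shows "isometryC C (inv f)"
proof -
  have b: "bij f" and n: "\<And>x y. normC C (f x - f y) = normC C (x - y)" using assms by (auto simp: isometryC_def)
  have "normC C (inv f x - inv f y) = normC C (x - y)" for x y
    using n[of "inv f x" "inv f y"] b by (simp add: bij_is_surj surj_f_inv_f)
  then show ?thesis using b bij_imp_bij_inv by (auto simp: isometryC_def)
qed

lemma iso_inv_f: "isometryC C f \<Longrightarrow> inv f (f x) = x"
  by (simp add: isometryC_def bij_is_inj)
lemma iso_f_inv: "isometryC C f \<Longrightarrow> f (inv f x) = x"
  by (simp add: isometryC_def bij_is_surj surj_f_inv_f)

lemma iso_refl: "isometryC C (\<lambda>u. m - u)"
proof -
  have "bij (\<lambda>u. m - u)" by (rule o_bij[where g="\<lambda>u. m - u"]) auto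
  then show ?thesis unfolding isometryC_def using normC_commute[OF cs] by (auto simp: algebra_simps)
qed

lemma iso_normC: "isometryC C f \<Longrightarrow> normC C (f x - f y) = normC C (x - y)"
  by (simp add: isometryC_def)

lemma MU_fix:
  fixes x y :: 'a
  defines "z \<equiv> (1/2) *\<^sub>R (x + y)"
  assumes g: "isometryC C g" "g x = x" "g y = y"
  shows "g z = z"
proof -
  define W where "W = {g. isometryC C g \<and> g x = x \<and> g y = y}"
  define \<Lambda> where "\<Lambda> = (\<lambda>g. normC C (g z - z)) ` W"
  define \<psi> where "\<psi> = (\<lambda>u. (x + y) - u)"
  have \<psi>z: "\<psi> z = z" unfolding \<psi>_def z_def by (rule half_diff)
  have bnd: "normC C (h z - z) \<le> 2 * normC C (x - z)" if "h \<in> W" for h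
  proof -
    have "normC C (h z - z) \<le> normC C (h z - h x) + normC C (h x - z)" by (rule normC_diff_triangle[OF cs])
    also have "\<dots> = normC C (z - x) + normC C (x - z)" using that iso_normC[of h z x] by (simp add: W_def)
    finally show ?thesis using normC_commute[OF cs, of z x] by simp
  qed
  have bdd: "bdd_above \<Lambda>" unfolding \<Lambda>_def using bnd by (intro bdd_aboveI[of _ "2 * normC C (x - z)"]) auto
  have "id \<in> W" unfolding W_def using iso_id by auto
  then have ne: "\<Lambda> \<noteq> {}" unfolding \<Lambda>_def by blast
  have dbl: "2 * normC C (h z - z) \<in> \<Lambda>" if h: "h \<in> W" for h
  proof -
    define h' where "h' = \<psi> \<circ> inv h \<circ> \<psi> \<circ> h"
    have hi: "isometryC C h" "h x = x" "h y = y" using h by (auto simp: W_def)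
    have iso': "isometryC C h'" unfolding h'_def \<psi>_def
      by (intro iso_comp iso_refl iso_inv hi(1))
    have ix: "inv h x = x" "inv h y = y" using iso_inv_f[OF hi(1), of x] iso_inv_f[OF hi(1), of y] hi by simp_all
    have "h' x = x" "h' y = y" by (simp_all add: h'_def \<psi>_def hi ix)
    then have "h' \<in> W" using iso' by (simp add: W_def)
    have "h' z - z = \<psi> (inv h (\<psi> (h z))) - \<psi> z" by (simp add: h'_def \<psi>z)
    also have "\<dots> = z - inv h (\<psi> (h z))" by (simp add: \<psi>_def)
    finally have "normC C (h' z - z) = normC C (h z - h (inv h (\<psi> (h z))))"
      using iso_normC[OF hi(1), of z "inv h (\<psi> (h z))"] by simp
    also have "\<dots> = normC C (h z - \<psi> (h z))" by (simp add: iso_f_inv[OF hi(1)])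
    also have "h z - \<psi> (h z) = 2 *\<^sub>R (h z - z)"
      unfolding \<psi>_def z_def by (simp add: scaleR_2 scaleR_diff_right algebra_simps)
    also have "normC C (2 *\<^sub>R (h z - z)) = 2 * normC C (h z - z)" by (simp add: normC_scale[OF cs])
    finally have "normC C (h' z - z) = 2 * normC C (h z - z)" .
    then show ?thesis using \<open>h' \<in> W\<close> unfolding \<Lambda>_def by (intro image_eqI[where x=h']) auto
  qed
  have gW: "g \<in> W" using g by (simp add: W_def)
  have "2 * normC C (h z - z) \<le> Sup \<Lambda>" if "h \<in> W" for h using dbl[OF that] bdd by (rule cSup_upper)
  then have "2 * Sup \<Lambda> \<le> Sup \<Lambda>"
  proof -
    have "Sup \<Lambda> \<le> Sup \<Lambda> / 2"
    proof (rule cSup_least[OF ne])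
      fix a assume "a \<in> \<Lambda>"
      then obtain h where h: "h \<in> W" "a = normC C (h z - z)" unfolding \<Lambda>_def by blast
      show "a \<le> Sup \<Lambda> / 2" using \<open>\<And>h. h \<in> W \<Longrightarrow> 2 * normC C (h z - z) \<le> Sup \<Lambda>\<close>[OF h(1)] h(2) by simp
    qed
    then show ?thesis by simp
  qed
  then have "Sup \<Lambda> \<le> 0" by simp
  moreover have "normC C (g z - z) \<le> Sup \<Lambda>" using gW bdd unfolding \<Lambda>_def by (intro cSup_upper) auto
  ultimately have "normC C (g z - z) = 0" using normC_nonneg[OF cs, of "g z - z"] by simp
  then show ?thesis using normC_eq0[OF cs] by simp
qed

lemma MU_mid:
  assumes f: "isometryC C f"
  shows "f ((1/2) *\<^sub>R (x + y)) = (1/2) *\<^sub>R (f x + f y)"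
proof -
  define z where "z = (1/2) *\<^sub>R (x + y)"
  define \<psi> where "\<psi> = (\<lambda>u. (x + y) - u)"
  define \<psi>' where "\<psi>' = (\<lambda>u. (f x + f y) - u)"
  define h where "h = \<psi> \<circ> inv f \<circ> \<psi>' \<circ> f"
  have iso: "isometryC C h" unfolding h_def \<psi>_def \<psi>'_def by (intro iso_comp iso_refl iso_inv f)
  have "h x = x" "h y = y" by (simp_all add: h_def \<psi>_def \<psi>'_def iso_inv_f[OF f])
  then have "h z = z" using MU_fix[OF iso] by (simp add: z_def)
  then have "\<psi> (inv f (\<psi>' (f z))) = z" by (simp add: h_def)
  then have "inv f (\<psi>' (f z)) = (x + y) - z" by (simp add: \<psi>_def algebra_simps)
  also have "(x + y) - z = z" unfolding z_def by (rule half_diff)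
  finally have "f (inv f (\<psi>' (f z))) = f z" by simp
  then have "\<psi>' (f z) = f z" by (simp add: iso_f_inv[OF f])
  then have "f x + f y = 2 *\<^sub>R f z" by (simp add: \<psi>'_def algebra_simps scaleR_2)
  then show ?thesis by (simp add: z_def)
qed

end


context
  fixes C :: "'a::euclidean_space set"
  assumes cs: "cs_convex_body C"
begin
lemma iso_lip: assumes f: "isometryC C f" shows "norm (f x - f y) \<le> (RC C / rC C) * norm (x - y)"
proof -
  have "norm (f x - f y) \<le> RC C * normC C (f x - f y)" by (rule normC_lower[OF cs])
  also have "\<dots> = RC C * normC C (x - y)" using iso_normC[OF cs f] by simp
  also have "\<dots> \<le> RC C * (norm (x - y) / rC C)" using normC_upper[OF cs, of "x - y"] RC[OF cs] by (intro mult_left_mono) auto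
  finally show ?thesis by simp
qed

lemma iso_continuous: assumes f: "isometryC C f" shows "continuous_on UNIV f"
  unfolding continuous_on_iff
proof (intro ballI allI impI)
  fix x :: 'a and e :: real assume e: "e > 0"
  have K: "RC C / rC C > 0" using RC[OF cs] rC[OF cs] by simp
  show "\<exists>d>0. \<forall>x'\<in>UNIV. dist x' x < d \<longrightarrow> dist (f x') (f x) < e"
  proof (intro exI[of _ "e / (RC C / rC C)"] conjI ballI impI)
    show "e / (RC C / rC C) > 0" using e K by (rule divide_pos_pos)
    fix y assume "dist y x < e / (RC C / rC C)"
    then have "(RC C / rC C) * norm (y - x) < e" using rC[OF cs] RC[OF cs] by (simp add: dist_norm field_simps)
    then show "dist (f y) (f x) < e" using iso_lip[OF f, of y x] by (simp add: dist_norm)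
  qed
qed

lemma MU_linear:
  assumes f: "isometryC C f"
  shows "linear (\<lambda>x. f x - f 0)"
proof -
  define g where "g = (\<lambda>x. f x - f 0)"
  have g0: "g 0 = 0" by (simp add: g_def)
  have mid: "g ((1/2) *\<^sub>R (x + y)) = (1/2) *\<^sub>R (g x + g y)" for x y
  proof -
    have e1: "(1/2) *\<^sub>R ((f x - f 0) + (f y - f 0)) = (1/2) *\<^sub>R (f x + f y) - (1/2) *\<^sub>R (f 0 + f 0)"
      by (simp add: algebra_simps)
    show ?thesis unfolding g_def e1 MU_mid[OF cs f] scaleR_half_double ..
  qed
  have half: "g ((1/2) *\<^sub>R x) = (1/2) *\<^sub>R g x" for x using mid[of x 0] g0 by simp
  have add: "g (x + y) = g x + g y" for x y
  proof -
    have "g (x + y) = 2 *\<^sub>R ((1/2) *\<^sub>R g (x + y))" by simp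
    also have "\<dots> = 2 *\<^sub>R g ((1/2) *\<^sub>R (x + y))" by (simp add: half)
    also have "\<dots> = g x + g y" by (simp add: mid)
    finally show ?thesis .
  qed
  have neg: "g (- x) = - g x" for x using minus_unique[of "g x" "g (-x)"] add[of x "-x"] g0 by simp
  have nat: "g (of_nat n *\<^sub>R x) = of_nat n *\<^sub>R g x" for n x
    by (induction n) (simp_all add: g0 add scaleR_add_left)
  have int: "g (of_int k *\<^sub>R x) = of_int k *\<^sub>R g x" for k x
  proof (cases "k \<ge> 0")
    case True then show ?thesis using nat[of "nat k" x] by simp
  next
    case False
    then have k: "real_of_int k = - real (nat (-k))" by simp
    have "g (of_int k *\<^sub>R x) = g (- (real (nat (-k)) *\<^sub>R x))" by (simp only: k scaleR_minus_left)
    also have "\<dots> = - (real (nat (-k)) *\<^sub>R g x)" by (simp only: neg nat)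
    also have "\<dots> = of_int k *\<^sub>R g x" by (simp only: k scaleR_minus_left)
    finally show ?thesis .
  qed
  have contg: "continuous_on UNIV g" unfolding g_def
    by (intro continuous_intros iso_continuous[OF f])
  have sc: "g (c *\<^sub>R x) = c *\<^sub>R g x" for c x
  proof -
    define A where "A = {c. g (c *\<^sub>R x) = c *\<^sub>R g x}"
    have "closed A" unfolding A_def
      by (intro closed_Collect_eq continuous_on_compose2[OF contg] continuous_intros) auto
    moreover have "\<rat> \<subseteq> A"
    proof
      fix q :: real assume "q \<in> \<rat>"
      then obtain a b where ab: "b > 0" "q = of_int a / of_int b" by (metis Rats_cases')
      have "of_int b *\<^sub>R g (q *\<^sub>R x) = g (of_int b *\<^sub>R (q *\<^sub>R x))" by (simp only: int)
      also have "of_int b *\<^sub>R (q *\<^sub>R x) = of_int a *\<^sub>R x" using ab by simp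
      also have "g \<dots> = of_int a *\<^sub>R g x" by (simp only: int)
      finally have eq: "of_int b *\<^sub>R g (q *\<^sub>R x) = of_int a *\<^sub>R g x" .
      have "g (q *\<^sub>R x) = (1 / of_int b) *\<^sub>R (of_int b *\<^sub>R g (q *\<^sub>R x))" using ab by simp
      also have "\<dots> = (of_int a / of_int b) *\<^sub>R g x" unfolding eq by simp
      finally have "g (q *\<^sub>R x) = (of_int a / of_int b) *\<^sub>R g x" .
      then show "q \<in> A" using ab by (simp add: A_def)
    qed
    ultimately have "closure \<rat> \<subseteq> A" by (rule closure_minimal[rotated])
    then show ?thesis using Rats_closure_real by (auto simp: A_def)
  qed
  show ?thesis unfolding g_def[symmetric] by (intro linearI add sc)
qed

lemma MU_affine:
  assumes f: "isometryC C f"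
  shows "f x = f 0 + (f x - f 0)" "normC C (f x - f 0) = normC C x"
  using iso_normC[OF cs f, of x 0] by auto

end


lemma finite_subseq:
  fixes X :: "nat \<Rightarrow> 'i \<Rightarrow> 'b::heine_borel"
  assumes "finite I" "\<forall>i\<in>I. bounded (range (\<lambda>n. X n i))"
  shows "\<exists>r. strict_mono r \<and> (\<forall>i\<in>I. \<exists>l. (\<lambda>n. X (r n) i) \<longlonglongrightarrow> l)"
  using assms
proof (induction I rule: finite_induct)
  case empty
  then show ?case using strict_mono_id by blast
next
  case (insert j I)
  then obtain r where r: "strict_mono r" "\<forall>i\<in>I. \<exists>l. (\<lambda>n. X (r n) i) \<longlonglongrightarrow> l" by auto
  have "bounded (range (\<lambda>n. X n j))" using insert by auto
  then have "bounded (range (\<lambda>n. X (r n) j))" by (rule bounded_subset) auto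
  then obtain l s where s: "strict_mono s" "((\<lambda>n. X (r n) j) \<circ> s) \<longlonglongrightarrow> l"
    using bounded_imp_convergent_subsequence by blast
  have "strict_mono (r \<circ> s)" using r(1) s(1) by (rule strict_mono_o)
  moreover have "\<forall>i\<in>insert j I. \<exists>l. (\<lambda>n. X ((r \<circ> s) n) i) \<longlonglongrightarrow> l"
  proof
    fix i assume "i \<in> insert j I"
    then show "\<exists>l. (\<lambda>n. X ((r \<circ> s) n) i) \<longlonglongrightarrow> l"
    proof
      assume "i = j" then show ?thesis using s(2) by (auto simp: o_def)
    next
      assume "i \<in> I"
      then obtain l where "(\<lambda>n. X (r n) i) \<longlonglongrightarrow> l" using r by auto
      then have "((\<lambda>n. X (r n) i) \<circ> s) \<longlonglongrightarrow> l" using s(1) by (rule LIMSEQ_subseq_LIMSEQ)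
      then show ?thesis by (auto simp: o_def)
    qed
  qed
  ultimately show ?case by blast
qed

lemma linear_expand:
  fixes A :: "'a::euclidean_space \<Rightarrow> 'b::real_vector"
  assumes "linear A"
  shows "A x = (\<Sum>e\<in>Basis. (x \<bullet> e) *\<^sub>R A e)"
proof -
  have "A x = A (\<Sum>e\<in>Basis. (x \<bullet> e) *\<^sub>R e)" by (simp add: euclidean_representation)
  also have "\<dots> = (\<Sum>e\<in>Basis. (x \<bullet> e) *\<^sub>R A e)"
    using assms by (simp add: linear_sum linear_scale)
  finally show ?thesis .
qed

context
  fixes C :: "'a::euclidean_space set"
  assumes cs: "cs_convex_body C"
begin

lemma iso_expand:
  assumes f: "isometryC C f"
  shows "f x = f 0 + (\<Sum>e\<in>Basis. (x \<bullet> e) *\<^sub>R (f e - f 0))"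
  using linear_expand[OF MU_linear[OF cs f], of x] by (simp add: algebra_simps)

lemma iso_limit:
  fixes f :: "nat \<Rightarrow> 'a \<Rightarrow> 'a"
  assumes f: "\<And>n. isometryC C (f n)" and bd: "bounded (range (\<lambda>n. f n a))"
  shows "\<exists>r F. strict_mono r \<and> isometryC C F \<and> (\<forall>x. (\<lambda>n. f (r n) x) \<longlonglongrightarrow> F x)"
proof -
  define I where "I = insert 0 (Basis :: 'a set)"
  have bdI: "bounded (range (\<lambda>n. f n e))" for e
  proof -
    obtain B where B: "\<And>n. norm (f n a) \<le> B" using bd by (auto simp: bounded_iff)
    have "norm (f n e) \<le> B + (RC C / rC C) * norm (e - a)" for n
    proof -
      have "norm (f n e) \<le> norm (f n a) + norm (f n e - f n a)" by (metis norm_triangle_sub add.commute)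
      also have "\<dots> \<le> B + (RC C / rC C) * norm (e - a)" using B[of n] iso_lip[OF cs f[of n], of e a] by simp
      finally show ?thesis .
    qed
    then show ?thesis by (auto simp: bounded_iff)
  qed
  obtain r where r: "strict_mono r" "\<forall>i\<in>I. \<exists>l. (\<lambda>n. f (r n) i) \<longlonglongrightarrow> l"
    using finite_subseq[of I "\<lambda>n i. f n i"] bdI by (auto simp: I_def)
  define L where "L = (\<lambda>i. lim (\<lambda>n. f (r n) i))"
  have L: "(\<lambda>n. f (r n) i) \<longlonglongrightarrow> L i" if "i \<in> I" for i
    using r(2) that unfolding L_def by (metis limI)
  define F where "F = (\<lambda>x. L 0 + (\<Sum>e\<in>Basis. (x \<bullet> e) *\<^sub>R (L e - L 0)))"
  have conv: "(\<lambda>n. f (r n) x) \<longlonglongrightarrow> F x" for x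
  proof -
    have "(\<lambda>n. f (r n) 0 + (\<Sum>e\<in>Basis. (x \<bullet> e) *\<^sub>R (f (r n) e - f (r n) 0))) \<longlonglongrightarrow> F x"
      unfolding F_def using L by (intro tendsto_intros) (auto simp: I_def)
    moreover have "(\<lambda>n. f (r n) x) = (\<lambda>n. f (r n) 0 + (\<Sum>e\<in>Basis. (x \<bullet> e) *\<^sub>R (f (r n) e - f (r n) 0)))"
      by (rule ext) (rule iso_expand[OF f])
    ultimately show ?thesis by (simp only:)
  qed
  have nF: "normC C (F x - F y) = normC C (x - y)" for x y
  proof -
    have "(\<lambda>n. normC C (f (r n) x - f (r n) y)) \<longlonglongrightarrow> normC C (F x - F y)"
      by (intro tendsto_normC[OF cs] tendsto_intros conv)
    moreover have "(\<lambda>n. normC C (f (r n) x - f (r n) y)) = (\<lambda>n. normC C (x - y))"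
      using iso_normC[OF cs f] by simp
    ultimately show ?thesis using LIMSEQ_const_iff by metis
  qed
  define LF where "LF = (\<lambda>x. (\<Sum>e\<in>Basis. (x \<bullet> e) *\<^sub>R (L e - L 0)))"
  have linLF: "linear LF" unfolding LF_def
    by (intro linearI) (simp_all add: inner_add_left scaleR_add_left sum.distrib scaleR_sum_right)
  have FLF: "F x = F 0 + LF x" for x by (simp add: F_def LF_def)
  have "inj LF"
  proof (rule linear_injective_0[THEN iffD2, OF linLF], intro allI impI)
    fix x assume "LF x = 0"
    then have "normC C (F x - F 0) = 0" using FLF[of x] normC_zero[OF cs] by simp
    then show "x = 0" using nF[of x 0] normC_eq0[OF cs] by simp
  qed
  then have sLF: "surj LF" using linLF linear_injective_imp_surjective by blast
  have "inj F"
  proof (rule injI)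
    fix x y assume "F x = F y"
    then show "x = y" using nF[of x y] normC_eq0[OF cs, of "x - y"] normC_zero[OF cs] by simp
  qed
  moreover have "surj F"
  proof -
    have "y \<in> range F" for y
    proof -
      obtain z where "LF z = y - F 0" using sLF by (metis surjD)
      then have "F z = y" using FLF[of z] by simp
      then show ?thesis by blast
    qed
    then show ?thesis by blast
  qed
  ultimately have "isometryC C F" using nF by (simp add: isometryC_def bij_def)
  then show ?thesis using r(1) conv by blast
qed

end


definition PhiV :: "'v set \<Rightarrow> ('v \<Rightarrow> 'a::euclidean_space) \<Rightarrow> ('v \<Rightarrow> 'a) \<Rightarrow> real" where
  "PhiV V p x = (\<Sum>v\<in>V. (norm (x v - p v))\<^sup>2)"

lemma inner_eq_fun_imp_eq:
  fixes g g' :: "'a::euclidean_space"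
  assumes "(\<lambda>h. g \<bullet> h) = (\<lambda>h. g' \<bullet> h)"
  shows "g = g'"
proof -
  have "g \<bullet> (g - g') = g' \<bullet> (g - g')" using assms by metis
  then have "(g - g') \<bullet> (g - g') = 0" by (simp add: inner_diff_left)
  then show ?thesis by simp
qed

lemma linear_functional_inner:
  fixes D :: "'a::euclidean_space \<Rightarrow> real"
  assumes "linear D"
  shows "D = (\<lambda>h. (\<Sum>b\<in>Basis. D b *\<^sub>R b) \<bullet> h)"
proof
  fix h
  have "D h = (\<Sum>b\<in>Basis. (h \<bullet> b) *\<^sub>R D b)" by (rule linear_expand[OF assms])
  also have "\<dots> = (\<Sum>b\<in>Basis. D b *\<^sub>R b) \<bullet> h"
    by (simp add: inner_sum_right inner_commute mult.commute)
  finally show "D h = (\<Sum>b\<in>Basis. D b *\<^sub>R b) \<bullet> h" .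
qed

lemma phiC_spec:
  assumes "((\<lambda>y. (normC C y)\<^sup>2 / 2) has_derivative (\<lambda>h. g \<bullet> h)) (at x)"
  shows "((\<lambda>y. (normC C y)\<^sup>2 / 2) has_derivative (\<lambda>h. phiC C x \<bullet> h)) (at x)" and "phiC C x = g"
proof -
  show d: "((\<lambda>y. (normC C y)\<^sup>2 / 2) has_derivative (\<lambda>h. phiC C x \<bullet> h)) (at x)"
    unfolding phiC_def using assms by (rule someI)
  show "phiC C x = g"
    using has_derivative_unique[OF d assms] by (rule inner_eq_fun_imp_eq)
qed

lemma deriv_seq:
  fixes k :: "'a::euclidean_space \<Rightarrow> real"
  assumes kd: "(k has_derivative (\<lambda>h. g \<bullet> h)) (at a)" and e: "e \<longlonglongrightarrow> 0"
    and ke: "\<And>n. k (a + e n) = k a"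
  shows "\<exists>\<rho>. \<rho> \<longlonglongrightarrow> 0 \<and> (\<forall>n. \<bar>g \<bullet> e n\<bar> \<le> \<rho> n * norm (e n))"
proof -
  define R where "R = (\<lambda>y. norm ((k y - k a) - g \<bullet> (y - a)) / norm (y - a))"
  have "(R \<longlongrightarrow> 0) (at a)" using kd unfolding has_derivative_iff_norm R_def by auto
  moreover have "R a = 0" by (simp add: R_def)
  ultimately have "isCont R a" by (simp add: isCont_def)
  moreover have "(\<lambda>n. a + e n) \<longlonglongrightarrow> a" using tendsto_add[OF tendsto_const e, of a] by simp
  ultimately have "(\<lambda>n. R (a + e n)) \<longlonglongrightarrow> R a" by (rule isCont_tendsto_compose)
  then have lim: "(\<lambda>n. R (a + e n)) \<longlonglongrightarrow> 0" using \<open>R a = 0\<close> by simp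
  have "\<bar>g \<bullet> e n\<bar> \<le> R (a + e n) * norm (e n)" for n
  proof (cases "e n = 0")
    case True then show ?thesis by simp
  next
    case False
    have "R (a + e n) * norm (e n) = norm (- (g \<bullet> e n))" using False ke[of n] by (simp add: R_def)
    then show ?thesis by simp
  qed
  then show ?thesis using lim by blast
qed

context
  fixes C :: "'a::euclidean_space set"
  assumes cs: "cs_convex_body C"
begin

lemma phiC_exists:
  assumes "normC C differentiable (at a)"
  shows "((\<lambda>y. (normC C y)\<^sup>2 / 2) has_derivative (\<lambda>h. phiC C a \<bullet> h)) (at a)"
proof -
  obtain D where D: "(normC C has_derivative D) (at a)" using assms by (auto simp: differentiable_def)
  have lin: "linear D" using D has_derivative_linear by blast
  have "((\<lambda>y. (normC C y)\<^sup>2 / 2) has_derivative (\<lambda>h. normC C a * D h)) (at a)"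
    unfolding power2_eq_square using D by (auto intro!: derivative_eq_intros simp: field_simps)
  moreover have "linear (\<lambda>h. normC C a * D h)" using lin by (auto simp: linear_iff algebra_simps)
  ultimately have "((\<lambda>y. (normC C y)\<^sup>2 / 2) has_derivative
      (\<lambda>h. (\<Sum>b\<in>Basis. (normC C a * D b) *\<^sub>R b) \<bullet> h)) (at a)"
    using linear_functional_inner by metis
  then show ?thesis by (rule phiC_spec(1))
qed

lemma phiC_neg:
  assumes "normC C differentiable (at a)"
  shows "phiC C (- a) = - phiC C a"
proof -
  define k where "k = (\<lambda>y. (normC C y)\<^sup>2 / 2)"
  have kd: "(k has_derivative (\<lambda>h. phiC C a \<bullet> h)) (at a)" unfolding k_def by (rule phiC_exists[OF assms])
  have u: "((\<lambda>x. - x) has_derivative (\<lambda>x. - x)) (at (-a))"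
    by (rule has_derivative_minus[OF has_derivative_ident])
  have "((\<lambda>x. k (- x)) has_derivative (\<lambda>x. phiC C a \<bullet> (- x))) (at (-a))"
    using has_derivative_compose[OF u, of k "\<lambda>h. phiC C a \<bullet> h"] kd by simp
  moreover have "(\<lambda>x. k (- x)) = k" by (auto simp: k_def normC_neg[OF cs])
  moreover have "(\<lambda>x. phiC C a \<bullet> (- x)) = (\<lambda>h. (- phiC C a) \<bullet> h)" by auto
  ultimately have "(k has_derivative (\<lambda>h. (- phiC C a) \<bullet> h)) (at (-a))" by simp
  then show ?thesis unfolding k_def by (rule phiC_spec(2))
qed

end


context
  fixes C :: "'a::euclidean_space set"
  assumes cs: "cs_convex_body C"
begin

lemma PhiV_nonneg: "PhiV V p x \<ge> 0" unfolding PhiV_def by (intro sum_nonneg) auto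

lemma exists_min:
  fixes q p :: "'v \<Rightarrow> 'a"
  assumes fin: "finite V" and ne: "V \<noteq> {}"
  shows "\<exists>F. isometryC C F \<and> (\<forall>G. isometryC C G \<longrightarrow> PhiV V p (\<lambda>v. F (q v)) \<le> PhiV V p (\<lambda>v. G (q v)))"
proof -
  define Ph where "Ph = (\<lambda>G. PhiV V p (\<lambda>v. G (q v)))"
  define M where "M = Ph ` {G. isometryC C G}"
  define m where "m = Inf M"
  have Mne: "M \<noteq> {}" using iso_id[OF cs] by (auto simp: M_def)
  have Mbdd: "bdd_below M" unfolding M_def Ph_def by (rule bdd_belowI[of _ 0]) (auto simp: PhiV_nonneg)
  have "\<exists>G. isometryC C G \<and> Ph G < m + inverse (real (Suc n))" for n
  proof -
    have "Inf M < m + inverse (real (Suc n))" by (simp add: m_def)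
    then obtain y where "y \<in> M" "y < m + inverse (real (Suc n))" using cInf_lessD[OF Mne] by blast
    then show ?thesis by (auto simp: M_def)
  qed
  then obtain Gs where Gs: "\<And>n. isometryC C (Gs n)" "\<And>n. Ph (Gs n) < m + inverse (real (Suc n))"
    by metis
  obtain v0 where v0: "v0 \<in> V" using ne by auto
  have "norm (Gs n (q v0)) \<le> norm (p v0) + (m + 2)" for n
  proof -
    have "(norm (Gs n (q v0) - p v0))\<^sup>2 \<le> Ph (Gs n)" unfolding Ph_def PhiV_def
      using fin v0 by (intro member_le_sum) auto
    also have "\<dots> \<le> m + 1" using Gs(2)[of n] by (smt (verit) inverse_le_1_iff of_nat_0_le_iff of_nat_Suc)
    finally have sq: "(norm (Gs n (q v0) - p v0))\<^sup>2 \<le> m + 1" .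
    have "norm (Gs n (q v0) - p v0) \<le> m + 2"
    proof (cases "norm (Gs n (q v0) - p v0) \<le> 1")
      case True
      have "0 \<le> m" unfolding m_def using Mne by (rule cInf_greatest) (auto simp: M_def Ph_def PhiV_nonneg)
      then show ?thesis using True by simp
    next
      case False
      then have "norm (Gs n (q v0) - p v0) * 1 \<le> norm (Gs n (q v0) - p v0) * norm (Gs n (q v0) - p v0)"
        by (intro mult_left_mono) auto
      then have "norm (Gs n (q v0) - p v0) \<le> (norm (Gs n (q v0) - p v0))\<^sup>2"
        by (simp add: power2_eq_square)
      then show ?thesis using sq by simp
    qed
    then show ?thesis by (metis add.commute norm_triangle_sub order_trans add_le_cancel_right)
  qed
  then have bd: "bounded (range (\<lambda>n. Gs n (q v0)))" by (auto simp: bounded_iff)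
  obtain r F where rF: "strict_mono r" "isometryC C F" "\<And>x. (\<lambda>n. Gs (r n) x) \<longlonglongrightarrow> F x"
    using iso_limit[OF cs Gs(1) bd] by blast
  have l1: "(\<lambda>n. Ph (Gs (r n))) \<longlonglongrightarrow> Ph F" unfolding Ph_def PhiV_def
    by (intro tendsto_intros rF(3))
  have "((\<lambda>n. inverse (real (Suc n))) \<circ> r) \<longlonglongrightarrow> 0"
    using LIMSEQ_inverse_real_of_nat rF(1) by (rule LIMSEQ_subseq_LIMSEQ)
  then have l2: "(\<lambda>n. m + inverse (real (Suc (r n)))) \<longlonglongrightarrow> m"
    using tendsto_add[OF tendsto_const, of _ 0 sequentially m] by (simp add: o_def)
  have "Ph F \<le> m" using l1 l2 by (rule LIMSEQ_le) (use Gs(2) less_imp_le in blast)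
  moreover have "m \<le> Ph G" if "isometryC C G" for G
    unfolding m_def using that Mbdd by (intro cInf_lower) (auto simp: M_def)
  ultimately show ?thesis using rF(2) unfolding Ph_def by (meson order_trans)
qed

lemma first_order:
  fixes q p :: "'v \<Rightarrow> 'a"
  assumes fin: "finite V" and F: "isometryC C F"
    and min: "\<forall>G. isometryC C G \<longrightarrow> PhiV V p (\<lambda>v. F (q v)) \<le> PhiV V p (\<lambda>v. G (q v))"
    and g: "infinitesimal_isometry C g"
  shows "(\<Sum>v\<in>V. g (F (q v)) \<bullet> (F (q v) - p v)) = 0"
proof -
  obtain \<gamma> :: "real \<Rightarrow> 'a \<Rightarrow> 'a" where \<gamma>: "\<And>t. isometryC C (\<gamma> t)" "\<gamma> 0 = id"
    "\<And>x. ((\<lambda>t. \<gamma> t x) has_vector_derivative g x) (at 0)"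
    using g unfolding infinitesimal_isometry_def by blast
  define x where "x = (\<lambda>v. F (q v))"
  define \<phi> where "\<phi> = (\<lambda>s. \<Sum>v\<in>V. (\<gamma> s (x v) - p v) \<bullet> (\<gamma> s (x v) - p v))"
  have hv: "((\<lambda>s. \<gamma> s (x v)) has_derivative (\<lambda>h. h *\<^sub>R g (x v))) (at 0)" for v
    using \<gamma>(3) by (simp add: has_vector_derivative_def)
  have "(\<phi> has_derivative (\<lambda>h. (2 * (\<Sum>v\<in>V. g (x v) \<bullet> (x v - p v))) * h)) (at 0)"
    unfolding \<phi>_def
    apply (rule has_derivative_eq_rhs)
     apply (rule has_derivative_sum)
     apply (rule has_derivative_inner)
      apply (rule has_derivative_diff[OF hv has_derivative_const])
     apply (rule has_derivative_diff[OF hv has_derivative_const])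
    apply (rule ext)
    apply (simp add: \<gamma>(2) sum_distrib_left sum_distrib_right inner_commute algebra_simps sum.distrib)
    done
  then have D: "(\<phi> has_real_derivative (2 * (\<Sum>v\<in>V. g (x v) \<bullet> (x v - p v)))) (at 0)"
    by (simp add: has_field_derivative_def)
  have "\<phi> 0 \<le> \<phi> y" for y
  proof -
    have "\<phi> 0 = PhiV V p (\<lambda>v. F (q v))" by (simp add: \<phi>_def PhiV_def \<gamma>(2) x_def power2_norm_eq_inner)
    also have "\<dots> \<le> PhiV V p (\<lambda>v. (\<gamma> y \<circ> F) (q v))" using min iso_comp[OF cs \<gamma>(1) F] by blast
    also have "\<dots> = \<phi> y" by (simp add: \<phi>_def PhiV_def x_def power2_norm_eq_inner)
    finally show ?thesis .
  qed
  then have "2 * (\<Sum>v\<in>V. g (x v) \<bullet> (x v - p v)) = 0"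
    using DERIV_local_min[OF D, of 1] by auto
  then show ?thesis by (simp add: x_def)
qed

end


context
  fixes C :: "'a::euclidean_space set" and V :: "'v set" and p :: "'v \<Rightarrow> 'a" and r :: "'v \<Rightarrow> real"
  assumes cs: "cs_convex_body C" and fin: "finite V" and sir: "sticky_inf_rigid C V p r"
begin

lemma local_rigid:
  "\<exists>\<epsilon>>0. \<forall>q. (\<forall>v\<in>V. normC C (q v - p v) < \<epsilon>) \<and>
      (\<forall>v w. contact_edge C V p r v w \<longrightarrow> normC C (q v - q w) = normC C (p v - p w)) \<longrightarrow>
      (\<exists>f. isometryC C f \<and> (\<forall>v\<in>V. q v = f (p v)))"
proof (rule ccontr)
  assume "\<not> ?thesis"
  then have "\<forall>n. \<exists>q. (\<forall>v\<in>V. normC C (q v - p v) < inverse (real (Suc n))) \<and>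
      (\<forall>v w. contact_edge C V p r v w \<longrightarrow> normC C (q v - q w) = normC C (p v - p w)) \<and>
      \<not> (\<exists>f. isometryC C f \<and> (\<forall>v\<in>V. q v = f (p v)))"
    by (metis inverse_positive_iff_positive of_nat_0_less_iff zero_less_Suc)
  then obtain Q where Qd: "\<And>n v. v \<in> V \<Longrightarrow> normC C (Q n v - p v) < inverse (real (Suc n))"
    and Qe: "\<And>n v w. contact_edge C V p r v w \<Longrightarrow> normC C (Q n v - Q n w) = normC C (p v - p w)"
    and Qn: "\<And>n f. isometryC C f \<Longrightarrow> \<not> (\<forall>v\<in>V. Q n v = f (p v))"
    by metis
  have ne: "V \<noteq> {}" using Qn[OF iso_id[OF cs], of 0] by auto
  have "\<forall>n. \<exists>F. isometryC C F \<and> (\<forall>G. isometryC C G \<longrightarrow> PhiV V p (\<lambda>v. F (Q n v)) \<le> PhiV V p (\<lambda>v. G (Q n v)))"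
    using exists_min[OF cs fin ne] by blast
  then obtain Fs where Fs: "\<And>n. isometryC C (Fs n)"
    and Fmin: "\<And>n. \<forall>G. isometryC C G \<longrightarrow> PhiV V p (\<lambda>v. Fs n (Q n v)) \<le> PhiV V p (\<lambda>v. G (Q n v))"
    by metis
  define X where "X = (\<lambda>n v. Fs n (Q n v))"
  define B where "B = (\<lambda>n. real (card V) * (RC C * inverse (real (Suc n)))\<^sup>2)"
  have PX: "PhiV V p (X n) \<le> B n" for n
  proof -
    have "PhiV V p (X n) \<le> PhiV V p (\<lambda>v. id (Q n v))" using Fmin[of n, rule_format, OF iso_id[OF cs]] by (simp add: X_def)
    also have "\<dots> \<le> (\<Sum>v\<in>V. (RC C * inverse (real (Suc n)))\<^sup>2)" unfolding PhiV_def
    proof (intro sum_mono)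
      fix v assume v: "v \<in> V"
      have "norm (Q n v - p v) \<le> RC C * normC C (Q n v - p v)" by (rule normC_lower[OF cs])
      also have "\<dots> \<le> RC C * inverse (real (Suc n))" using Qd[OF v, of n] RC[OF cs] by simp
      finally show "(norm (id (Q n v) - p v))\<^sup>2 \<le> (RC C * inverse (real (Suc n)))\<^sup>2"
        by (simp add: power_mono)
    qed
    also have "\<dots> = B n" by (simp add: B_def)
    finally show ?thesis .
  qed
  have "B \<longlonglongrightarrow> real (card V) * (RC C * 0)\<^sup>2" unfolding B_def
    by (intro tendsto_intros LIMSEQ_inverse_real_of_nat)
  then have B0: "B \<longlonglongrightarrow> 0" by simp
  have PX0: "(\<lambda>n. PhiV V p (X n)) \<longlonglongrightarrow> 0"
    by (rule tendsto_sandwich[of "\<lambda>_. 0" _ _ B]) (use PX PhiV_nonneg[OF cs] B0 in \<open>auto intro!: always_eventually\<close>)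
  define eps where "eps = (\<lambda>n. sqrt (PhiV V p (X n)))"
  have eps0: "eps \<longlonglongrightarrow> 0" unfolding eps_def using tendsto_real_sqrt[OF PX0] by simp
  have epspos: "eps n > 0" for n
  proof (rule ccontr)
    assume "\<not> eps n > 0"
    then have "PhiV V p (X n) = 0" using PhiV_nonneg[OF cs, of V p "X n"] by (simp add: eps_def)
    then have "\<forall>v\<in>V. (norm (X n v - p v))\<^sup>2 = 0" unfolding PhiV_def using fin
      by (subst (asm) sum_nonneg_eq_0_iff) auto
    then have "\<forall>v\<in>V. Q n v = inv (Fs n) (p v)"
      by (auto simp: X_def dest!: bspec) (metis iso_inv_f[OF cs Fs])
    then show False using Qn[OF iso_inv[OF cs Fs[of n]], of n] by blast
  qed
  define D where "D = (\<lambda>n v. (1 / eps n) *\<^sub>R (X n v - p v))"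
  have XD: "X n v = p v + eps n *\<^sub>R D n v" for n v using epspos[of n] by (simp add: D_def)
  have Dsum: "(\<Sum>v\<in>V. (norm (D n v))\<^sup>2) = 1" for n
  proof -
    have "(\<Sum>v\<in>V. (norm (D n v))\<^sup>2) = (\<Sum>v\<in>V. (norm (X n v - p v))\<^sup>2) / (eps n)\<^sup>2"
      using epspos[of n] by (simp add: D_def sum_divide_distrib power_divide)
    also have "\<dots> = 1" using epspos[of n] PhiV_nonneg[OF cs, of V p "X n"]
      by (simp add: eps_def PhiV_def)
    finally show ?thesis .
  qed
  have Dbd: "norm (D n v) \<le> 1" if "v \<in> V" for n v
  proof -
    have "(norm (D n v))\<^sup>2 \<le> 1" using Dsum[of n] member_le_sum[OF that, of "\<lambda>v. (norm (D n v))\<^sup>2"] fin by simp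
    then show ?thesis by (simp add: power_le_one_iff abs_le_square_iff)
  qed
  have "\<forall>v\<in>V. bounded (range (\<lambda>n. D n v))" using Dbd by (auto simp: bounded_iff)
  then obtain rr where rr: "strict_mono rr" "\<forall>v\<in>V. \<exists>l. (\<lambda>n. D (rr n) v) \<longlonglongrightarrow> l"
    using finite_subseq[OF fin, of D] by blast
  define d where "d = (\<lambda>v. lim (\<lambda>n. D (rr n) v))"
  have dlim: "(\<lambda>n. D (rr n) v) \<longlonglongrightarrow> d v" if "v \<in> V" for v
    using rr(2) that unfolding d_def by (metis limI)
  have "(\<lambda>n. \<Sum>v\<in>V. (norm (D (rr n) v))\<^sup>2) \<longlonglongrightarrow> (\<Sum>v\<in>V. (norm (d v))\<^sup>2)"
    by (intro tendsto_intros dlim)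
  then have "(\<lambda>n. 1::real) \<longlonglongrightarrow> (\<Sum>v\<in>V. (norm (d v))\<^sup>2)" using Dsum by simp
  then have dsum: "(\<Sum>v\<in>V. (norm (d v))\<^sup>2) = 1" using LIMSEQ_const_iff by metis
  have epsr: "(\<lambda>n. eps (rr n)) \<longlonglongrightarrow> 0" using LIMSEQ_subseq_LIMSEQ[OF eps0 rr(1)] by (simp add: o_def)
  have wp: "\<And>v w. contact_edge C V p r v w \<Longrightarrow> p v \<noteq> p w \<and> normC C differentiable (at (p v - p w))"
    using sir by (auto simp: sticky_inf_rigid_def well_positioned_def)
  have flex: "is_flex C V p r d"
    unfolding is_flex_def
  proof (intro allI impI)
    fix v w assume E: "contact_edge C V p r v w"
    then have vw: "v \<in> V" "w \<in> V" by (auto simp: contact_edge_def)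
    define a where "a = p v - p w"
    have dif: "normC C differentiable (at a)" using wp[OF E] by (simp add: a_def)
    define k where "k = (\<lambda>y. (normC C y)\<^sup>2 / 2)"
    have kd: "(k has_derivative (\<lambda>h. phiC C a \<bullet> h)) (at a)" unfolding k_def by (rule phiC_exists[OF cs dif])
    define e where "e = (\<lambda>n. eps (rr n) *\<^sub>R (D (rr n) v - D (rr n) w))"
    have e0: "e \<longlonglongrightarrow> 0" unfolding e_def
      using tendsto_scaleR[OF epsr tendsto_diff[OF dlim[OF vw(1)] dlim[OF vw(2)]]] by simp
    have ke: "k (a + e n) = k a" for n
    proof -
      have "a + e n = X (rr n) v - X (rr n) w" by (simp add: e_def a_def XD algebra_simps)
      then have "normC C (a + e n) = normC C (Q (rr n) v - Q (rr n) w)"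
        by (simp add: X_def iso_normC[OF cs Fs])
      also have "\<dots> = normC C a" using Qe[OF E] by (simp add: a_def)
      finally show ?thesis by (simp add: k_def)
    qed
    obtain \<rho> where \<rho>: "\<rho> \<longlonglongrightarrow> 0" "\<And>n. \<bar>phiC C a \<bullet> e n\<bar> \<le> \<rho> n * norm (e n)"
      using deriv_seq[OF kd e0 ke] by blast
    have bnd: "norm (phiC C a \<bullet> (D (rr n) v - D (rr n) w)) \<le> 2 * \<bar>\<rho> n\<bar>" for n
    proof -
      have ep: "eps (rr n) > 0" by (rule epspos)
      have "eps (rr n) * \<bar>phiC C a \<bullet> (D (rr n) v - D (rr n) w)\<bar> = \<bar>phiC C a \<bullet> e n\<bar>"
        using ep by (simp add: e_def abs_mult)
      also have "\<dots> \<le> \<rho> n * norm (e n)" by (rule \<rho>(2))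
      also have "\<dots> \<le> \<bar>\<rho> n\<bar> * norm (e n)" by (intro mult_right_mono) auto
      also have "\<dots> = eps (rr n) * (\<bar>\<rho> n\<bar> * norm (D (rr n) v - D (rr n) w))"
        using ep by (simp add: e_def)
      finally have "\<bar>phiC C a \<bullet> (D (rr n) v - D (rr n) w)\<bar> \<le> \<bar>\<rho> n\<bar> * norm (D (rr n) v - D (rr n) w)"
        using ep by simp
      also have "\<dots> \<le> \<bar>\<rho> n\<bar> * 2"
      proof (intro mult_left_mono)
        have "norm (D (rr n) v - D (rr n) w) \<le> norm (D (rr n) v) + norm (D (rr n) w)" by (rule norm_triangle_ineq4)
        then show "norm (D (rr n) v - D (rr n) w) \<le> 2" using Dbd[OF vw(1)] Dbd[OF vw(2)] by smt
      qed auto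
      finally show ?thesis by simp
    qed
    have "(\<lambda>n. 2 * \<bar>\<rho> n\<bar>) \<longlonglongrightarrow> 2 * \<bar>0\<bar>" by (intro tendsto_intros \<rho>(1))
    then have g0: "(\<lambda>n. 2 * \<bar>\<rho> n\<bar>) \<longlonglongrightarrow> 0" by simp
    have ev: "eventually (\<lambda>n. norm (phiC C a \<bullet> (D (rr n) v - D (rr n) w)) \<le> 2 * \<bar>\<rho> n\<bar>) sequentially"
      by (intro always_eventually allI bnd)
    have l0: "(\<lambda>n. phiC C a \<bullet> (D (rr n) v - D (rr n) w)) \<longlonglongrightarrow> 0"
      by (rule Lim_null_comparison[OF ev g0])
    have l1: "(\<lambda>n. phiC C a \<bullet> (D (rr n) v - D (rr n) w)) \<longlonglongrightarrow> phiC C a \<bullet> (d v - d w)"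
      by (intro tendsto_intros dlim vw)
    have z: "phiC C a \<bullet> (d v - d w) = 0" using LIMSEQ_unique[OF l1 l0] .
    have "phiC C (p w - p v) = - phiC C a" using phiC_neg[OF cs dif] by (simp add: a_def)
    then show "phiC C (p v - p w) \<bullet> d v + phiC C (p w - p v) \<bullet> d w = 0"
      using z by (simp add: a_def inner_diff_right)
  qed
  then have "trivial_flex C V p d" using sir by (auto simp: sticky_inf_rigid_def)
  then obtain g A b where gA: "linear A" "g = (\<lambda>x. A x + b)" and gi: "infinitesimal_isometry C g"
    and gp: "\<And>v. v \<in> V \<Longrightarrow> g (p v) = d v"
    unfolding trivial_flex_def by blast
  define S where "S = (\<lambda>n. \<Sum>v\<in>V. d v \<bullet> D (rr n) v + eps (rr n) * (A (D (rr n) v) \<bullet> D (rr n) v))"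
  have S0: "S n = 0" for n
  proof -
    have fo: "(\<Sum>v\<in>V. g (X (rr n) v) \<bullet> (X (rr n) v - p v)) = 0"
      using first_order[OF cs fin Fs Fmin gi] by (simp add: X_def)
    have "(\<Sum>v\<in>V. g (X (rr n) v) \<bullet> (X (rr n) v - p v)) = (\<Sum>v\<in>V. eps (rr n) * (d v \<bullet> D (rr n) v + eps (rr n) * (A (D (rr n) v) \<bullet> D (rr n) v)))"
    proof (rule sum.cong[OF refl])
      fix v assume v: "v \<in> V"
      have "g (X (rr n) v) = d v + eps (rr n) *\<^sub>R A (D (rr n) v)"
        using gp[OF v] gA by (simp add: XD linear_add[OF gA(1)] linear_scale[OF gA(1)] algebra_simps)
      then show "g (X (rr n) v) \<bullet> (X (rr n) v - p v) = eps (rr n) * (d v \<bullet> D (rr n) v + eps (rr n) * (A (D (rr n) v) \<bullet> D (rr n) v))"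
        by (simp add: XD inner_add_left algebra_simps)
    qed
    also have "\<dots> = eps (rr n) * S n" by (simp add: S_def sum_distrib_left)
    finally show ?thesis using fo epspos[of "rr n"] by simp
  qed
  have Acont: "bounded_linear A" using gA(1) linear_conv_bounded_linear by blast
  have "S \<longlonglongrightarrow> (\<Sum>v\<in>V. d v \<bullet> d v + 0 * (A (d v) \<bullet> d v))" unfolding S_def
    by (intro tendsto_intros dlim epsr bounded_linear.tendsto[OF Acont])
  then have "S \<longlonglongrightarrow> 1" using dsum by (simp add: power2_norm_eq_inner)
  moreover have "S = (\<lambda>n. 0)" using S0 by (intro ext) simp
  then have "S \<longlonglongrightarrow> 0" by simp
  ultimately show False using LIMSEQ_unique by fastforce
qed

end


context
  fixes C :: "'a::euclidean_space set" and V :: "'v set" and p :: "'v \<Rightarrow> 'a" and r :: "'v \<Rightarrow> real"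
  assumes cs: "cs_convex_body C" and fin: "finite V" and sir: "sticky_inf_rigid C V p r"
begin

lemma transfer_rigid:
  assumes \<epsilon>: "\<forall>q. (\<forall>v\<in>V. normC C (q v - p v) < \<epsilon>) \<and>
      (\<forall>v w. contact_edge C V p r v w \<longrightarrow> normC C (q v - q w) = normC C (p v - p w)) \<longrightarrow>
      (\<exists>f. isometryC C f \<and> (\<forall>v\<in>V. q v = f (p v)))"
    and f: "isometryC C f" and close: "\<forall>v\<in>V. normC C (q v - f (p v)) < \<epsilon>"
    and same: "\<forall>v w. contact_edge C V p r v w \<longrightarrow> normC C (q v - q w) = normC C (p v - p w)"
  shows "\<exists>h. isometryC C h \<and> (\<forall>v\<in>V. q v = h (p v))"
proof -
  define q' where "q' = (\<lambda>v. inv f (q v))"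
  have "\<forall>v\<in>V. normC C (q' v - p v) < \<epsilon>"
  proof
    fix v assume "v \<in> V"
    have "normC C (q' v - p v) = normC C (inv f (q v) - inv f (f (p v)))"
      by (simp add: q'_def iso_inv_f[OF cs f])
    also have "\<dots> = normC C (q v - f (p v))" by (rule iso_normC[OF cs iso_inv[OF cs f]])
    finally show "normC C (q' v - p v) < \<epsilon>" using close \<open>v \<in> V\<close> by simp
  qed
  moreover have "\<forall>v w. contact_edge C V p r v w \<longrightarrow> normC C (q' v - q' w) = normC C (p v - p w)"
    using same iso_normC[OF cs iso_inv[OF cs f]] by (simp add: q'_def)
  ultimately obtain h where h: "isometryC C h" "\<forall>v\<in>V. q' v = h (p v)" using \<epsilon> by blast
  have "\<forall>v\<in>V. q v = (f \<circ> h) (p v)"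
  proof
    fix v assume "v \<in> V"
    have "q v = f (q' v)" by (simp add: q'_def iso_f_inv[OF cs f])
    then show "q v = (f \<circ> h) (p v)" using h(2) \<open>v \<in> V\<close> by simp
  qed
  then show ?thesis using iso_comp[OF cs f h(1)] by blast
qed

lemma main_rigid: "sticky_rigid C V p r"
  unfolding sticky_rigid_def
proof (intro allI impI ballI)
  fix \<delta> :: real and \<alpha> :: "real \<Rightarrow> 'v \<Rightarrow> 'a" and t
  assume \<delta>: "\<delta> > 0"
  assume H: "(\<forall>v\<in>V. continuous_on {0..\<delta>} (\<lambda>t. \<alpha> t v)) \<and> (\<forall>v\<in>V. \<alpha> 0 v = p v) \<and>
      (\<forall>v w t. contact_edge C V p r v w \<and> t \<in> {0..\<delta>} \<longrightarrow> normC C (\<alpha> t v - \<alpha> t w) = normC C (p v - p w))"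
  assume t: "t \<in> {0..\<delta>}"
  obtain \<epsilon> where \<epsilon>0: "\<epsilon> > 0" and \<epsilon>: "\<forall>q. (\<forall>v\<in>V. normC C (q v - p v) < \<epsilon>) \<and>
      (\<forall>v w. contact_edge C V p r v w \<longrightarrow> normC C (q v - q w) = normC C (p v - p w)) \<longrightarrow>
      (\<exists>f. isometryC C f \<and> (\<forall>v\<in>V. q v = f (p v)))"
    using local_rigid[OF cs fin sir] by blast
  define InS where "InS = (\<lambda>s. \<exists>f. isometryC C f \<and> (\<forall>v\<in>V. \<alpha> s v = f (p v)))"
  define T where "T = {s \<in> {0..\<delta>}. \<not> InS s}"
  have same: "\<forall>v w. contact_edge C V p r v w \<longrightarrow> normC C (\<alpha> s v - \<alpha> s w) = normC C (p v - p w)"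
    if "s \<in> {0..\<delta>}" for s using H that by blast
  have In0: "InS 0" unfolding InS_def using H iso_id[OF cs] by (intro exI[of _ id]) auto
  show "\<exists>f. isometryC C f \<and> (\<forall>v\<in>V. \<alpha> t v = f (p v))"
  proof (rule ccontr)
    assume nt: "\<not> ?thesis"
    then have Tne: "T \<noteq> {}" using t by (auto simp: T_def InS_def)
    have Tbdd: "bdd_below T" by (rule bdd_belowI[of _ 0]) (auto simp: T_def)
    define ts where "ts = Inf T"
    have ts0: "ts \<ge> 0" unfolding ts_def using Tne by (rule cInf_greatest) (auto simp: T_def)
    have tsd: "ts \<le> \<delta>"
    proof -
      obtain s where "s \<in> T" using Tne by auto
      then have "ts \<le> s" "s \<le> \<delta>" unfolding ts_def using Tbdd by (auto intro: cInf_lower simp: T_def)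
      then show ?thesis by simp
    qed
    define c where "c = \<epsilon> * rC C / 2"
    have c0: "c > 0" using \<epsilon>0 rC[OF cs] by (simp add: c_def)
    have "\<forall>v\<in>V. eventually (\<lambda>s. dist (\<alpha> s v) (\<alpha> ts v) < c) (at ts within {0..\<delta>})"
    proof
      fix v assume "v \<in> V"
      then have "continuous_on {0..\<delta>} (\<lambda>t. \<alpha> t v)" using H by blast
      then have "continuous (at ts within {0..\<delta>}) (\<lambda>t. \<alpha> t v)"
        using ts0 tsd by (simp add: continuous_on_eq_continuous_within)
      then have "((\<lambda>t. \<alpha> t v) \<longlongrightarrow> \<alpha> ts v) (at ts within {0..\<delta>})" by (simp add: continuous_within)
      then show "eventually (\<lambda>s. dist (\<alpha> s v) (\<alpha> ts v) < c) (at ts within {0..\<delta>})"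
        using c0 by (simp add: tendsto_iff)
    qed
    then have "eventually (\<lambda>s. \<forall>v\<in>V. dist (\<alpha> s v) (\<alpha> ts v) < c) (at ts within {0..\<delta>})"
      by (rule eventually_ball_finite[OF fin])
    then obtain \<eta> where \<eta>0: "\<eta> > 0"
      and \<eta>: "\<And>s. s \<in> {0..\<delta>} \<Longrightarrow> s \<noteq> ts \<Longrightarrow> dist s ts < \<eta> \<Longrightarrow> \<forall>v\<in>V. dist (\<alpha> s v) (\<alpha> ts v) < c"
      unfolding eventually_at by blast
    have near: "normC C (\<alpha> s v - \<alpha> ts v) < \<epsilon> / 2" if "s \<in> {0..\<delta>}" "dist s ts < \<eta>" "v \<in> V" for s v
    proof (cases "s = ts")
      case True then show ?thesis using \<epsilon>0 normC_zero[OF cs] by simp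
    next
      case False
      then have "norm (\<alpha> s v - \<alpha> ts v) < c" using \<eta>[OF that(1) False that(2)] that(3) by (simp add: dist_norm)
      then have "norm (\<alpha> s v - \<alpha> ts v) / rC C < \<epsilon> / 2" using rC[OF cs] by (simp add: c_def field_simps)
      then show ?thesis using normC_upper[OF cs, of "\<alpha> s v - \<alpha> ts v"] by linarith
    qed
    have step: "InS s'" if st: "InS s" "s \<in> {0..\<delta>}" "dist s ts < \<eta>" "s' \<in> {0..\<delta>}" "dist s' ts < \<eta>" for s s'
    proof -
      obtain f where f: "isometryC C f" "\<forall>v\<in>V. \<alpha> s v = f (p v)" using st(1) by (auto simp: InS_def)
      have "\<forall>v\<in>V. normC C (\<alpha> s' v - f (p v)) < \<epsilon>"
      proof
        fix v assume v: "v \<in> V"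
        have "normC C (\<alpha> s' v - f (p v)) = normC C (\<alpha> s' v - \<alpha> s v)" using f(2) v by simp
        also have "\<dots> \<le> normC C (\<alpha> s' v - \<alpha> ts v) + normC C (\<alpha> ts v - \<alpha> s v)"
          by (rule normC_diff_triangle[OF cs])
        also have "normC C (\<alpha> ts v - \<alpha> s v) = normC C (\<alpha> s v - \<alpha> ts v)" by (rule normC_commute[OF cs])
        finally show "normC C (\<alpha> s' v - f (p v)) < \<epsilon>"
          using near[OF st(4) st(5) v] near[OF st(2) st(3) v] by simp
      qed
      then show ?thesis unfolding InS_def
        using transfer_rigid[OF \<epsilon> f(1) _ same[OF st(4)]] by blast
    qed
    define s0 where "s0 = max 0 (ts - \<eta>/2)"
    have s0: "s0 \<in> {0..\<delta>}" "dist s0 ts < \<eta>" using ts0 tsd \<eta>0 by (auto simp: s0_def dist_real_def)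
    have Ins0: "InS s0"
    proof (cases "s0 = 0")
      case True then show ?thesis using In0 by simp
    next
      case False
      then have "s0 < ts" using \<eta>0 by (auto simp: s0_def)
      then have "s0 \<notin> T" unfolding ts_def using Tbdd cInf_lower not_le by blast
      then show ?thesis using s0(1) by (auto simp: T_def)
    qed
    obtain s where s: "s \<in> T" "s < ts + \<eta>" using cInf_lessD[OF Tne, of "ts + \<eta>"] \<eta>0 by (auto simp: ts_def)
    have "ts \<le> s" unfolding ts_def using s(1) Tbdd by (rule cInf_lower)
    then have "dist s ts < \<eta>" using s(2) by (simp add: dist_real_def)
    moreover have "s \<in> {0..\<delta>}" using s(1) by (simp add: T_def)
    ultimately have "InS s" using step[OF Ins0 s0] by blast
    then show False using s(1) by (simp add: T_def)
  qed
qed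

end

theorem proposition3p1:
  fixes C :: "'a::euclidean_space set" and V :: "'v set"
    and p :: "'v \<Rightarrow> 'a" and r :: "'v \<Rightarrow> real"
  assumes "cs_convex_body C" and "smooth_body C"
    and "C_packing C V p r" and "sticky_inf_rigid C V p r"
  shows "sticky_rigid C V p r"
proof -
  have "finite V" using assms(3) by (simp add: C_packing_def)
  then show ?thesis using main_rigid[OF assms(1) _ assms(4)] by blast
qed



end
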